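(* Let $K\in\mathcal S_2$ be nonempty and bounded, and let $u\in S^1$. Then the Steiner symmetral $S_u(K)$ also belongs to $\mathcal S_2$.
   Context: For $x\in\mathbb R^n$, $B(x,1)$ is the closed Euclidean unit ball centered at $x$. The class $\mathcal S_n$ of ball-bodies consists of all intersections of families of closed Euclidean unit balls in $\mathbb R^n$ (equivalently, sets of the form $A^c=\bigcap_{x\in A}B(x,1)$, $A\subseteq\mathbb R^n$). For a compact convex set $K$ and $u\in S^{n-1}$, for each $x$ in the orthogonal projection $P_{u^\perp}(K)$ write $K\cap(x+\mathbb Ru)=[x+a(x)u,x+b(x)u]$; the Steiner symmetral is $S_u(K)=\{x+yu: x\in P_{u^\perp}(K),\ |y|\le |b(x)-a(x)|/2\}$. *)

theory Defs
  imports "HOL-Analysis.Analysis"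
begin

text \<open>Class S_n of ball-bodies: intersections of families of closed unit balls
  (the empty family gives the whole space).\<close>
definition ball_bodies :: "('a::euclidean_space) set set" where
  "ball_bodies = {K. \<exists>A. K = (\<Inter>x\<in>A. cball x 1)}"

definition proj_perp :: "'a::real_inner \<Rightarrow> 'a \<Rightarrow> 'a" where
  "proj_perp u z = z - (z \<bullet> u) *\<^sub>R u"

text \<open>For x in the projection, K \<inter> (x + R u) = [x + a(x) u, x + b(x) u];
  a(x), b(x) are the endpoints of the parameter interval.\<close>
definition sec_lo :: "'a::real_inner set \<Rightarrow> 'a \<Rightarrow> 'a \<Rightarrow> real" where
  "sec_lo K u x = Inf {t. x + t *\<^sub>R u \<in> K}"

definition sec_hi :: "'a::real_inner set \<Rightarrow> 'a \<Rightarrow> 'a \<Rightarrow> real" where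
  "sec_hi K u x = Sup {t. x + t *\<^sub>R u \<in> K}"

definition steiner_symmetral :: "'a::real_inner \<Rightarrow> 'a set \<Rightarrow> 'a set" where
  "steiner_symmetral u K =
     {x + y *\<^sub>R u | x y. x \<in> proj_perp u ` K \<and> \<bar>y\<bar> \<le> \<bar>sec_hi K u x - sec_lo K u x\<bar> / 2}"

end

theory Submission
  imports Defs
begin



definition RR :: "real \<Rightarrow> real \<Rightarrow> real" where "RR a t = sqrt (1 - (t - a)\<^sup>2)"
definition pp :: "real \<Rightarrow> real \<Rightarrow> real" where "pp a t = - (t - a) / RR a t"

lemma RR_pos: "\<bar>t - a\<bar> < 1 \<Longrightarrow> RR a t > 0"
  unfolding RR_def by (simp add: abs_square_less_1)

lemma RR_sq: "\<bar>t - a\<bar> \<le> 1 \<Longrightarrow> (RR a t)\<^sup>2 = 1 - (t - a)\<^sup>2"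
  unfolding RR_def by (simp add: abs_square_le_1)

lemma deriv_RR: "\<bar>t - a\<bar> < 1 \<Longrightarrow> DERIV (RR a) t :> (a - t) / RR a t"
proof -
  assume h: "\<bar>t - a\<bar> < 1"
  have pos: "1 - (t - a)\<^sup>2 > 0" using h by (simp add: abs_square_less_1)
  have "DERIV (\<lambda>t. sqrt (1 - (t - a)\<^sup>2)) t :> inverse (sqrt (1 - (t - a)\<^sup>2)) / 2 * (- (2 * (t - a)))"
    by (rule DERIV_chain2[of sqrt _ "\<lambda>t. 1 - (t - a)\<^sup>2", OF DERIV_real_sqrt[OF pos]]) (auto intro!: derivative_eq_intros)
  then show ?thesis unfolding RR_def[abs_def] by (rule DERIV_cong) (use pos in \<open>simp add: field_simps\<close>)
qed

lemma deriv_pp: "\<bar>t - a\<bar> < 1 \<Longrightarrow> DERIV (pp a) t :> - 1 / (RR a t)^3"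
proof -
  assume h: "\<bar>t - a\<bar> < 1"
  have R: "RR a t > 0" using RR_pos[OF h] .
  have sq: "(RR a t)\<^sup>2 = 1 - (t - a)\<^sup>2" using RR_sq h by simp
  have "DERIV (\<lambda>t. - (t - a) / RR a t) t :> ((-1) * RR a t - (- (t - a)) * (- (t - a) / RR a t)) / (RR a t * RR a t)"
    by (rule DERIV_divide) (auto intro!: derivative_eq_intros deriv_RR[OF h] simp: R[THEN less_imp_neq, symmetric])
  moreover have "((-1) * RR a t - (- (t - a)) * (- (t - a) / RR a t)) / (RR a t * RR a t) = - 1 / (RR a t)^3"
    using R sq by (simp add: field_simps power2_eq_square power3_eq_cube)
  ultimately show ?thesis unfolding pp_def[abs_def] by simp
qed

lemma avg_sq_le: "((x + y) / 2)\<^sup>2 \<le> ((x::real)\<^sup>2 + y\<^sup>2) / 2"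
proof -
  have "((x + y) / 2)\<^sup>2 = (x\<^sup>2 + y\<^sup>2) / 2 - ((x - y) / 2)\<^sup>2" by (simp add: power2_eq_square field_simps)
  then show ?thesis by (smt (verit) zero_le_power2)
qed

definition PP :: "real \<Rightarrow> real \<Rightarrow> real \<Rightarrow> real" where "PP a1 a2 t = (pp a1 t + pp a2 t) / 2"
definition Phi :: "real \<Rightarrow> real \<Rightarrow> real \<Rightarrow> real" where "Phi a1 a2 t = PP a1 a2 t / sqrt (1 + (PP a1 a2 t)\<^sup>2)"

lemma power_mean_32:
  fixes A B Q :: real
  assumes "A \<ge> 0" "B \<ge> 0" "Q \<ge> 0" "Q\<^sup>2 \<le> (A\<^sup>2 + B\<^sup>2) / 2"
  shows "Q^3 \<le> (A^3 + B^3) / 2"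
proof -
  have f: "(A\<^sup>2 + B\<^sup>2)^3 \<le> 2 * (A^3 + B^3)\<^sup>2"
  proof -
    have "2 * (A^3 + B^3)\<^sup>2 - (A\<^sup>2 + B\<^sup>2)^3 = (A - B)\<^sup>2 * (A^4 + 2*A^3*B + 2*A*B^3 + B^4)"
      by algebra
    moreover have "(A - B)\<^sup>2 * (A^4 + 2*A^3*B + 2*A*B^3 + B^4) \<ge> 0"
      using assms by (intro mult_nonneg_nonneg) auto
    ultimately show ?thesis by linarith
  qed
  have "(Q^3)\<^sup>2 = (Q\<^sup>2)^3" by (simp add: power_mult[symmetric] mult.commute)
  also have "\<dots> \<le> ((A\<^sup>2 + B\<^sup>2) / 2)^3"
    using assms by (intro power_mono) auto
  also have "\<dots> = (A\<^sup>2 + B\<^sup>2)^3 / 8" by (simp add: power_divide)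
  also have "\<dots> \<le> ((A^3 + B^3) / 2)\<^sup>2" using f by (simp add: power_divide)
  finally show ?thesis
    by (rule power2_le_imp_le) (use assms in auto)
qed

lemma inv_RR_sq: "\<bar>t - a\<bar> < 1 \<Longrightarrow> (1 / RR a t)\<^sup>2 = 1 + (pp a t)\<^sup>2"
proof -
  assume h: "\<bar>t - a\<bar> < 1"
  have R: "RR a t > 0" using RR_pos[OF h] .
  have sq: "(RR a t)\<^sup>2 = 1 - (t - a)\<^sup>2" using RR_sq h by simp
  show ?thesis unfolding pp_def using R sq
    by (simp add: field_simps power2_eq_square)
qed

lemma deriv_Phi:
  assumes h1: "\<bar>t - a1\<bar> < 1" and h2: "\<bar>t - a2\<bar> < 1"
  shows "DERIV (Phi a1 a2) t :> (- (1 / (RR a1 t)^3 + 1 / (RR a2 t)^3) / 2) / (sqrt (1 + (PP a1 a2 t)\<^sup>2))^3"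
proof -
  define P where "P = PP a1 a2 t"
  define D where "D = - (1 / (RR a1 t)^3 + 1 / (RR a2 t)^3) / 2"
  define Q where "Q = sqrt (1 + P\<^sup>2)"
  have Qpos: "Q > 0" unfolding Q_def by (simp add: add_pos_nonneg)
  have Qsq: "Q\<^sup>2 = 1 + P\<^sup>2" unfolding Q_def by simp
  have dP: "DERIV (PP a1 a2) t :> D"
  proof -
    have "DERIV (\<lambda>t. (pp a1 t + pp a2 t) / 2) t :> (- 1 / (RR a1 t)^3 + - 1 / (RR a2 t)^3) / 2"
      by (auto intro!: derivative_eq_intros deriv_pp h1 h2)
    then show ?thesis unfolding PP_def[abs_def] D_def by (rule DERIV_cong) (simp add: field_simps)
  qed
  have pos: "1 + P\<^sup>2 > 0" by (simp add: add_pos_nonneg)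
  have dQ: "DERIV (\<lambda>t. sqrt (1 + (PP a1 a2 t)\<^sup>2)) t :> inverse (sqrt (1 + P\<^sup>2)) / 2 * (2 * P * D)"
    by (rule DERIV_chain2[of sqrt _ "\<lambda>t. 1 + (PP a1 a2 t)\<^sup>2", OF DERIV_real_sqrt[OF pos[unfolded P_def]], folded P_def])
       (auto intro!: derivative_eq_intros dP simp: P_def)
  have "DERIV (\<lambda>t. PP a1 a2 t / sqrt (1 + (PP a1 a2 t)\<^sup>2)) t :> (D * Q - P * (inverse Q / 2 * (2 * P * D))) / (Q * Q)"
    using DERIV_divide[OF dP dQ] Qpos by (simp add: P_def Q_def)
  moreover have "(D * Q - P * (inverse Q / 2 * (2 * P * D))) / (Q * Q) = D / Q^3"
    using Qpos Qsq by (simp add: field_simps power2_eq_square power3_eq_cube)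
  ultimately show ?thesis unfolding Phi_def[abs_def] by (simp add: D_def Q_def P_def)
qed

lemma Phi_deriv_le:
  assumes h1: "\<bar>t - a1\<bar> < 1" and h2: "\<bar>t - a2\<bar> < 1"
  shows "(- (1 / (RR a1 t)^3 + 1 / (RR a2 t)^3) / 2) / (sqrt (1 + (PP a1 a2 t)\<^sup>2))^3 \<le> -1"
proof -
  define A where "A = 1 / RR a1 t"
  define B where "B = 1 / RR a2 t"
  define Q where "Q = sqrt (1 + (PP a1 a2 t)\<^sup>2)"
  have Apos: "A > 0" unfolding A_def using RR_pos[OF h1] by simp
  have Bpos: "B > 0" unfolding B_def using RR_pos[OF h2] by simp
  have Qpos: "Q > 0" unfolding Q_def by (simp add: add_pos_nonneg)
  have A2: "A\<^sup>2 = 1 + (pp a1 t)\<^sup>2" unfolding A_def using inv_RR_sq[OF h1] .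
  have B2: "B\<^sup>2 = 1 + (pp a2 t)\<^sup>2" unfolding B_def using inv_RR_sq[OF h2] .
  have Q2: "Q\<^sup>2 \<le> (A\<^sup>2 + B\<^sup>2) / 2"
  proof -
    have "Q\<^sup>2 = 1 + ((pp a1 t + pp a2 t) / 2)\<^sup>2" unfolding Q_def PP_def by (simp add: add_nonneg_nonneg)
    also have "\<dots> \<le> 1 + ((pp a1 t)\<^sup>2 + (pp a2 t)\<^sup>2) / 2"
      using avg_sq_le by simp
    finally have X: "Q\<^sup>2 \<le> 1 + ((pp a1 t)\<^sup>2 + (pp a2 t)\<^sup>2) / 2" .
    show ?thesis using X A2 B2 by (simp add: field_simps)
  qed
  have "Q^3 \<le> (A^3 + B^3) / 2" using power_mean_32[OF _ _ _ Q2] Apos Bpos Qpos by auto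
  moreover have "1 / (RR a1 t)^3 = A^3" "1 / (RR a2 t)^3 = B^3" unfolding A_def B_def by (simp_all add: power_divide)
  ultimately show ?thesis using Qpos unfolding Q_def[symmetric]
    by (simp add: divide_le_eq)
qed




definition GG :: "real \<Rightarrow> real \<Rightarrow> real \<Rightarrow> real" where "GG a1 a2 t = (RR a1 t + RR a2 t) / 2"

lemma Phi_abs_lt: "\<bar>Phi a1 a2 t\<bar> < 1"
proof -
  define P where "P = PP a1 a2 t"
  have Q: "sqrt (1 + P\<^sup>2) > 0" by (simp add: add_pos_nonneg)
  have lt: "\<bar>P\<bar> < sqrt (1 + P\<^sup>2)"
    by (rule real_less_rsqrt) simp
  have "\<bar>P / sqrt (1 + P\<^sup>2)\<bar> = \<bar>P\<bar> / sqrt (1 + P\<^sup>2)"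
    using Q by (simp add: abs_divide)
  also have "\<dots> < 1" using lt pos_divide_less_eq[OF Q] by simp
  finally show ?thesis unfolding Phi_def P_def .
qed

lemma Phi_sq: "(Phi a1 a2 t)\<^sup>2 = (PP a1 a2 t)\<^sup>2 / (1 + (PP a1 a2 t)\<^sup>2)"
proof -
  have "0 \<le> 1 + (PP a1 a2 t)\<^sup>2" by (simp add: add_nonneg_nonneg)
  then show ?thesis unfolding Phi_def by (simp add: power_divide)
qed

lemma sqrt_one_minus_Phi: "sqrt (1 - (Phi a1 a2 t)\<^sup>2) = 1 / sqrt (1 + (PP a1 a2 t)\<^sup>2)"
proof -
  define P where "P = PP a1 a2 t"
  have pos: "1 + P\<^sup>2 > 0" by (simp add: add_pos_nonneg)
  have "1 - P\<^sup>2 / (1 + P\<^sup>2) = 1 / (1 + P\<^sup>2)"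
    using pos by (simp add: diff_divide_distrib[symmetric] divide_simps)
  then have "1 - (Phi a1 a2 t)\<^sup>2 = 1 / (1 + P\<^sup>2)" unfolding Phi_sq P_def by simp
  then show ?thesis unfolding P_def[symmetric] by (simp add: real_sqrt_divide)
qed

lemma inv_phi:
  fixes P w :: real
  assumes "P / sqrt (1 + P\<^sup>2) \<le> w" "\<bar>w\<bar> < 1"
  shows "P \<le> w / sqrt (1 - w\<^sup>2)"
proof -
  define Q where "Q = sqrt (1 + P\<^sup>2)"
  define S where "S = sqrt (1 - w\<^sup>2)"
  have Qpos: "Q > 0" unfolding Q_def by (simp add: add_pos_nonneg)
  have Q2: "Q\<^sup>2 = 1 + P\<^sup>2" unfolding Q_def by (simp add: add_nonneg_nonneg)
  have w2: "w\<^sup>2 < 1" using assms(2) by (simp add: abs_square_less_1)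
  have Spos: "S > 0" unfolding S_def using w2 by simp
  have S2: "S\<^sup>2 = 1 - w\<^sup>2" unfolding S_def using w2 by simp
  have PwQ: "P \<le> w * Q" using assms(1) Qpos unfolding Q_def[symmetric] by (simp add: divide_le_eq)
  have "P * S \<le> w"
  proof (cases "P \<le> 0")
    case True
    show ?thesis
    proof (cases "w \<ge> 0")
      case True
      then show ?thesis using \<open>P \<le> 0\<close> Spos by (smt (verit) mult_nonpos_nonneg)
    next
      case False
      have "w * Q \<le> 0" using False Qpos by (simp add: mult_nonpos_nonneg)
      have "(w * Q)\<^sup>2 \<le> P\<^sup>2"
      proof -
        have "\<bar>w * Q\<bar> \<le> \<bar>P\<bar>" using PwQ \<open>w * Q \<le> 0\<close> by linarith
        then show ?thesis using abs_le_square_iff by blast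
      qed
      then have "w\<^sup>2 * (1 + P\<^sup>2) \<le> P\<^sup>2" using Q2 by (simp add: power_mult_distrib)
      moreover have "(P * S)\<^sup>2 = P\<^sup>2 - P\<^sup>2 * w\<^sup>2" by (simp add: power_mult_distrib S2 right_diff_distrib)
      ultimately have "w\<^sup>2 \<le> (P * S)\<^sup>2" by (simp add: algebra_simps)
      then have "\<bar>w\<bar> \<le> \<bar>P * S\<bar>" using abs_le_square_iff by blast
      moreover have "P * S \<le> 0" using True Spos by (simp add: mult_nonpos_nonneg)
      ultimately show ?thesis using False by linarith
    qed
  next
    case False
    then have Ppos: "P > 0" by simp
    then have wpos: "w * Q > 0" using PwQ by linarith
    have "P\<^sup>2 \<le> (w * Q)\<^sup>2" using PwQ Ppos by (intro power_mono) auto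
    then have "P\<^sup>2 \<le> w\<^sup>2 * (1 + P\<^sup>2)" using Q2 by (simp add: power_mult_distrib)
    moreover have "(P * S)\<^sup>2 = P\<^sup>2 - P\<^sup>2 * w\<^sup>2" by (simp add: power_mult_distrib S2 right_diff_distrib)
    ultimately have "(P * S)\<^sup>2 \<le> w\<^sup>2" by (simp add: algebra_simps)
    moreover have "w > 0" using wpos Qpos by (simp add: zero_less_mult_iff)
    ultimately show ?thesis using power2_le_imp_le by (smt (verit))
  qed
  then show ?thesis unfolding S_def[symmetric] using pos_le_divide_eq[OF Spos] by blast
qed

lemma deriv_GG: "\<bar>t - a1\<bar> < 1 \<Longrightarrow> \<bar>t - a2\<bar> < 1 \<Longrightarrow> DERIV (GG a1 a2) t :> PP a1 a2 t"
proof -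
  assume h1: "\<bar>t - a1\<bar> < 1" and h2: "\<bar>t - a2\<bar> < 1"
  have "DERIV (\<lambda>t. (RR a1 t + RR a2 t) / 2) t :> ((a1 - t) / RR a1 t + (a2 - t) / RR a2 t) / 2"
    by (auto intro!: derivative_eq_intros deriv_RR h1 h2 simp: algebra_simps)
  moreover have "((a1 - t) / RR a1 t + (a2 - t) / RR a2 t) / 2 = PP a1 a2 t" unfolding PP_def pp_def by simp
  ultimately show ?thesis unfolding GG_def[abs_def] by (rule DERIV_cong)
qed

lemma deriv_Phi_plus:
  assumes h1: "\<bar>t - a1\<bar> < 1" and h2: "\<bar>t - a2\<bar> < 1"
  shows "\<exists>y. DERIV (\<lambda>s. Phi a1 a2 s + s) t :> y \<and> y \<le> 0"
proof -
  have "DERIV (\<lambda>s. Phi a1 a2 s + s) t :> (- (1 / (RR a1 t)^3 + 1 / (RR a2 t)^3) / 2) / (sqrt (1 + (PP a1 a2 t)\<^sup>2))^3 + 1"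
    by (auto intro!: derivative_eq_intros deriv_Phi h1 h2)
  then show ?thesis using Phi_deriv_le[OF h1 h2] by (intro exI[of _ "_ + 1"]) auto
qed

lemma TR:
  assumes h1: "\<bar>x1 - a1\<bar> < 1" and h2: "\<bar>x1 - a2\<bar> < 1" and lt: "x1 < x"
    and b1: "x \<le> a1 + 1" and b2: "x \<le> a2 + 1"
  shows "\<bar>x - (x1 + Phi a1 a2 x1)\<bar> \<le> 1 \<and>
    GG a1 a2 x - GG a1 a2 x1 \<le> sqrt (1 - (x - (x1 + Phi a1 a2 x1))\<^sup>2) - 1 / sqrt (1 + (PP a1 a2 x1)\<^sup>2)"
proof -
  define C1 where "C1 = x1 + Phi a1 a2 x1"
  have mono: "Phi a1 a2 t + t \<le> C1" if t1: "x1 \<le> t" and t2: "t < a1 + 1" and t3: "t < a2 + 1" for t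
  proof -
    have "(\<lambda>s. Phi a1 a2 s + s) t \<le> (\<lambda>s. Phi a1 a2 s + s) x1"
    proof (rule DERIV_nonpos_imp_nonincreasing[OF t1])
      fix s assume "x1 \<le> s" "s \<le> t"
      then have "\<bar>s - a1\<bar> < 1" "\<bar>s - a2\<bar> < 1" using h1 h2 t2 t3 by auto
      then show "\<exists>y. DERIV (\<lambda>s. Phi a1 a2 s + s) s :> y \<and> y \<le> 0" by (rule deriv_Phi_plus)
    qed
    then show ?thesis unfolding C1_def by simp
  qed
  have hi: "x \<le> C1 + 1"
  proof (rule ccontr)
    assume "\<not> x \<le> C1 + 1"
    define t where "t = max x1 (C1 + 1)"
    have "Phi a1 a2 t + t \<le> C1" using mono[of t] lt b1 b2 \<open>\<not> x \<le> C1 + 1\<close> unfolding t_def by auto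
    moreover have "t \<ge> C1 + 1" unfolding t_def by simp
    ultimately have "Phi a1 a2 t \<le> -1" by linarith
    then show False using Phi_abs_lt[of a1 a2 t] by linarith
  qed
  have lo: "C1 - 1 < x1" unfolding C1_def using Phi_abs_lt[of a1 a2 x1] by linarith
  define k where "k = (\<lambda>s. GG a1 a2 s - RR C1 s)"
  have cont: "continuous_on {x1..x} k"
    unfolding k_def GG_def[abs_def] RR_def[abs_def] by (intro continuous_intros) auto
  have "k x \<le> k x1"
  proof (rule DERIV_nonpos_imp_decreasing_open[OF less_imp_le[OF lt] _ cont])
    fix s assume s1: "x1 < s" and s2: "s < x"
    have ha1: "\<bar>s - a1\<bar> < 1" "\<bar>s - a2\<bar> < 1" using h1 h2 s1 s2 b1 b2 by auto
    have hc: "\<bar>s - C1\<bar> < 1" using s1 s2 hi lo by auto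
    have dk: "DERIV k s :> PP a1 a2 s - (C1 - s) / RR C1 s"
      unfolding k_def by (auto intro!: derivative_eq_intros deriv_GG deriv_RR ha1 hc)
    have "Phi a1 a2 s + s \<le> C1" using mono[of s] s1 s2 b1 b2 by auto
    then have "PP a1 a2 s / sqrt (1 + (PP a1 a2 s)\<^sup>2) \<le> C1 - s" unfolding Phi_def by linarith
    moreover have "\<bar>C1 - s\<bar> < 1" using hc by linarith
    ultimately have "PP a1 a2 s \<le> (C1 - s) / sqrt (1 - (C1 - s)\<^sup>2)" by (rule inv_phi)
    moreover have "RR C1 s = sqrt (1 - (C1 - s)\<^sup>2)" unfolding RR_def by (simp add: power2_commute)
    ultimately have "PP a1 a2 s - (C1 - s) / RR C1 s \<le> 0" by simp
    then show "\<exists>y. DERIV k s :> y \<and> y \<le> 0" using dk by blast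
  qed
  moreover have "RR C1 x1 = 1 / sqrt (1 + (PP a1 a2 x1)\<^sup>2)"
  proof -
    have "RR C1 x1 = sqrt (1 - (Phi a1 a2 x1)\<^sup>2)" unfolding RR_def C1_def by (simp add: power2_commute)
    then show ?thesis using sqrt_one_minus_Phi by simp
  qed
  moreover have "RR C1 x = sqrt (1 - (x - C1)\<^sup>2)" unfolding RR_def ..
  ultimately have "GG a1 a2 x - GG a1 a2 x1 \<le> sqrt (1 - (x - C1)\<^sup>2) - 1 / sqrt (1 + (PP a1 a2 x1)\<^sup>2)"
    unfolding k_def by linarith
  moreover have "\<bar>x - C1\<bar> \<le> 1" using hi lo lt by auto
  ultimately show ?thesis unfolding C1_def by blast
qed

lemma RR_refl: "RR (2 * c - a) (2 * c - t) = RR a t"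
  unfolding RR_def by (simp add: power2_commute algebra_simps)

lemma pp_refl: "pp (2 * c - a) (2 * c - t) = - pp a t"
proof -
  have "- (2 * c - t - (2 * c - a)) = - (- (t - a))" by simp
  then show ?thesis unfolding pp_def RR_refl by (metis minus_divide_left)
qed

lemma PP_refl: "PP (2 * c - a1) (2 * c - a2) (2 * c - t) = - PP a1 a2 t"
  unfolding PP_def pp_refl by (simp add: field_simps)

lemma Phi_refl: "Phi (2 * c - a1) (2 * c - a2) (2 * c - t) = - Phi a1 a2 t"
  unfolding Phi_def PP_refl by simp

lemma GG_refl: "GG (2 * c - a1) (2 * c - a2) (2 * c - t) = GG a1 a2 t"
  unfolding GG_def RR_refl by simp

lemma Tfull:
  assumes h1: "\<bar>x1 - a1\<bar> < 1" and h2: "\<bar>x1 - a2\<bar> < 1"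
    and b1: "\<bar>x - a1\<bar> \<le> 1" and b2: "\<bar>x - a2\<bar> \<le> 1"
  shows "\<bar>x - (x1 + Phi a1 a2 x1)\<bar> \<le> 1 \<and>
    GG a1 a2 x - GG a1 a2 x1 \<le> sqrt (1 - (x - (x1 + Phi a1 a2 x1))\<^sup>2) - 1 / sqrt (1 + (PP a1 a2 x1)\<^sup>2)"
proof (cases x1 x rule: linorder_cases)
  case less
  then show ?thesis using TR[OF h1 h2 less] b1 b2 by auto
next
  case equal
  have "sqrt (1 - (Phi a1 a2 x1)\<^sup>2) = 1 / sqrt (1 + (PP a1 a2 x1)\<^sup>2)" by (rule sqrt_one_minus_Phi)
  then show ?thesis using equal Phi_abs_lt[of a1 a2 x1] by auto
next
  case greater
  have "\<bar>(2 * x1 - x) - (x1 + Phi (2 * x1 - a1) (2 * x1 - a2) x1)\<bar> \<le> 1 \<and>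
    GG (2 * x1 - a1) (2 * x1 - a2) (2 * x1 - x) - GG (2 * x1 - a1) (2 * x1 - a2) x1
      \<le> sqrt (1 - ((2 * x1 - x) - (x1 + Phi (2 * x1 - a1) (2 * x1 - a2) x1))\<^sup>2)
         - 1 / sqrt (1 + (PP (2 * x1 - a1) (2 * x1 - a2) x1)\<^sup>2)"
    by (rule TR) (use h1 h2 b1 b2 greater in auto)
  moreover have "Phi (2 * x1 - a1) (2 * x1 - a2) x1 = - Phi a1 a2 x1"
    using Phi_refl[of x1 a1 a2 x1] by simp
  moreover have "PP (2 * x1 - a1) (2 * x1 - a2) x1 = - PP a1 a2 x1"
    using PP_refl[of x1 a1 a2 x1] by simp
  moreover have "GG (2 * x1 - a1) (2 * x1 - a2) x1 = GG a1 a2 x1"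
    using GG_refl[of x1 a1 a2 x1] by simp
  moreover have "GG (2 * x1 - a1) (2 * x1 - a2) (2 * x1 - x) = GG a1 a2 x"
    using GG_refl[of x1 a1 a2 x] by simp
  moreover have "((2 * x1 - x) - (x1 - Phi a1 a2 x1))\<^sup>2 = (x - (x1 + Phi a1 a2 x1))\<^sup>2"
    by (simp add: power2_commute algebra_simps)
  moreover have "\<bar>(2 * x1 - x) - (x1 - Phi a1 a2 x1)\<bar> = \<bar>x - (x1 + Phi a1 a2 x1)\<bar>"
    by (simp add: abs_minus_commute algebra_simps)
  ultimately show ?thesis by simp
qed




lemma chord_aux:
  fixes s X1 X2 R1 R2 :: real
  assumes "0 \<le> s" "s \<le> R1" "s \<le> R2" "R1 > 0" "R2 > 0"
    "R1\<^sup>2 + X1\<^sup>2 = 1" "R2\<^sup>2 + X2\<^sup>2 = 1"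
  shows "s\<^sup>2 * (1 + ((X1 / R1 + X2 / R2) / 2)\<^sup>2) \<le> 1"
proof -
  define u1 where "u1 = s * X1 / R1"
  define u2 where "u2 = s * X2 / R2"
  have U1: "\<bar>u1\<bar> \<le> \<bar>X1\<bar>"
  proof -
    have "\<bar>u1\<bar> = (s / R1) * \<bar>X1\<bar>" unfolding u1_def using assms by (simp add: abs_mult)
    also have "\<dots> \<le> 1 * \<bar>X1\<bar>" using assms by (intro mult_right_mono) auto
    finally show ?thesis by simp
  qed
  have U2: "\<bar>u2\<bar> \<le> \<bar>X2\<bar>"
  proof -
    have "\<bar>u2\<bar> = (s / R2) * \<bar>X2\<bar>" unfolding u2_def using assms by (simp add: abs_mult)
    also have "\<dots> \<le> 1 * \<bar>X2\<bar>" using assms by (intro mult_right_mono) auto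
    finally show ?thesis by simp
  qed
  have eq: "s\<^sup>2 * (1 + ((X1 / R1 + X2 / R2) / 2)\<^sup>2) = s\<^sup>2 + ((u1 + u2) / 2)\<^sup>2"
  proof -
    have e: "(u1 + u2) / 2 = s * ((X1 / R1 + X2 / R2) / 2)" unfolding u1_def u2_def
      by (simp add: distrib_left)
    have "((u1 + u2) / 2)\<^sup>2 = s\<^sup>2 * ((X1 / R1 + X2 / R2) / 2)\<^sup>2" by (subst e) (rule power_mult_distrib)
    then show ?thesis by (simp add: distrib_left)
  qed
  show ?thesis
  proof (cases "\<bar>X2\<bar> \<le> \<bar>X1\<bar>")
    case True
    have "\<bar>(u1 + u2) / 2\<bar> \<le> \<bar>X1\<bar>" using U1 U2 True by (simp add: abs_le_iff) linarith
    then have "((u1 + u2) / 2)\<^sup>2 \<le> X1\<^sup>2" using abs_le_square_iff by blast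
    moreover have "s\<^sup>2 \<le> R1\<^sup>2" using assms by (intro power_mono) auto
    ultimately show ?thesis unfolding eq using assms by linarith
  next
    case False
    have "\<bar>(u1 + u2) / 2\<bar> \<le> \<bar>X2\<bar>" using U1 U2 False by (simp add: abs_le_iff) linarith
    then have "((u1 + u2) / 2)\<^sup>2 \<le> X2\<^sup>2" using abs_le_square_iff by blast
    moreover have "s\<^sup>2 \<le> R2\<^sup>2" using assms by (intro power_mono) auto
    ultimately show ?thesis unfolding eq using assms by linarith
  qed
qed

lemma chord:
  assumes h1: "\<bar>x1 - ca\<bar> < 1" and h2: "\<bar>x1 - da\<bar> < 1"
    and L0: "(cb + RR ca x1) - (db - RR da x1) \<ge> 0"
    and P1: "(x1 - ca)\<^sup>2 + ((db - RR da x1) - cb)\<^sup>2 \<le> 1"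
    and P2: "(x1 - da)\<^sup>2 + ((cb + RR ca x1) - db)\<^sup>2 \<le> 1"
  shows "((cb + RR ca x1) - (db - RR da x1)) / 2 \<le> 1 / sqrt (1 + (PP ca da x1)\<^sup>2)"
proof -
  define Rc where "Rc = RR ca x1"
  define Rd where "Rd = RR da x1"
  define s where "s = ((cb + Rc) - (db - Rd)) / 2"
  have Rcp: "Rc > 0" unfolding Rc_def using RR_pos h1 by simp
  have Rdp: "Rd > 0" unfolding Rd_def using RR_pos h2 by simp
  have Rc2: "Rc\<^sup>2 + (x1 - ca)\<^sup>2 = 1" unfolding Rc_def using RR_sq[of x1 ca] h1 by simp
  have Rd2: "Rd\<^sup>2 + (x1 - da)\<^sup>2 = 1" unfolding Rd_def using RR_sq[of x1 da] h2 by simp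
  have "((db - Rd) - cb)\<^sup>2 \<le> Rc\<^sup>2" using P1 Rc2 unfolding Rc_def Rd_def by linarith
  then have "\<bar>(db - Rd) - cb\<bar> \<le> \<bar>Rc\<bar>" using abs_le_square_iff by blast
  then have "\<bar>(db - Rd) - cb\<bar> \<le> Rc" using Rcp by simp
  then have s1: "s \<le> Rc" unfolding s_def by (auto simp: abs_le_iff)
  have "((cb + Rc) - db)\<^sup>2 \<le> Rd\<^sup>2" using P2 Rd2 unfolding Rc_def Rd_def by linarith
  then have "\<bar>(cb + Rc) - db\<bar> \<le> \<bar>Rd\<bar>" using abs_le_square_iff by blast
  then have "\<bar>(cb + Rc) - db\<bar> \<le> Rd" using Rdp by simp
  then have s2: "s \<le> Rd" unfolding s_def by (auto simp: abs_le_iff)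
  have s0: "s \<ge> 0" unfolding s_def Rc_def Rd_def using L0 by simp
  have PPe: "PP ca da x1 = - (((x1 - ca) / Rc + (x1 - da) / Rd) / 2)"
    unfolding PP_def pp_def Rc_def Rd_def by (simp add: minus_divide_left add_divide_distrib)
  have key: "s\<^sup>2 * (1 + (((x1 - ca) / Rc + (x1 - da) / Rd) / 2)\<^sup>2) \<le> 1"
    by (rule chord_aux[OF s0 s1 s2 Rcp Rdp Rc2 Rd2])
  define Q where "Q = sqrt (1 + (PP ca da x1)\<^sup>2)"
  have Qp: "Q > 0" unfolding Q_def by (simp add: add_pos_nonneg)
  have Q2: "Q\<^sup>2 = 1 + (PP ca da x1)\<^sup>2" unfolding Q_def
    by (rule real_sqrt_pow2) (simp add: add_nonneg_nonneg)
  have PPsq: "(PP ca da x1)\<^sup>2 = (((x1 - ca) / Rc + (x1 - da) / Rd) / 2)\<^sup>2" unfolding PPe by (rule power2_minus)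
  have "(s * Q)\<^sup>2 = s\<^sup>2 * Q\<^sup>2" by (rule power_mult_distrib)
  also have "\<dots> = s\<^sup>2 * (1 + (((x1 - ca) / Rc + (x1 - da) / Rd) / 2)\<^sup>2)" by (simp only: Q2 PPsq)
  also have "\<dots> \<le> 1\<^sup>2" using key by simp
  finally have "(s * Q)\<^sup>2 \<le> 1\<^sup>2" .
  then have "s * Q \<le> 1" by (rule power2_le_imp_le) simp
  then have "s \<le> 1 / Q" using pos_le_divide_eq[OF Qp] by blast
  then show ?thesis unfolding s_def Q_def Rc_def Rd_def .
qed




definition K2 :: "(real \<times> real) set \<Rightarrow> (real \<times> real) set" where
  "K2 A = (\<Inter>e\<in>A. cball e 1)"
definition sec2 :: "(real \<times> real) set \<Rightarrow> real \<Rightarrow> real set" where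
  "sec2 A x = {y. (x, y) \<in> K2 A}"
definition I2 :: "(real \<times> real) set \<Rightarrow> real set" where
  "I2 A = fst ` K2 A"
definition H2 :: "(real \<times> real) set \<Rightarrow> real \<Rightarrow> real" where
  "H2 A x = \<bar>Sup (sec2 A x) - Inf (sec2 A x)\<bar> / 2"
definition S2 :: "(real \<times> real) set \<Rightarrow> (real \<times> real) set" where
  "S2 A = {(x, y). x \<in> I2 A \<and> \<bar>y\<bar> \<le> H2 A x}"

lemma in_cball_iff: "((x::real), (y::real)) \<in> cball (a, b) 1 \<longleftrightarrow> (x - a)\<^sup>2 + (y - b)\<^sup>2 \<le> 1"
proof -
  have "dist (a, b) (x, y) = sqrt ((x - a)\<^sup>2 + (y - b)\<^sup>2)"
    by (simp add: dist_Pair_Pair dist_real_def power2_commute)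
  then show ?thesis by (simp add: mem_cball)
qed

lemma in_cball_iff': "(z::real\<times>real) \<in> cball e 1 \<longleftrightarrow> (fst z - fst e)\<^sup>2 + (snd z - snd e)\<^sup>2 \<le> 1"
  using in_cball_iff[of "fst z" "snd z" "fst e" "snd e"] by simp

lemma K2_iff: "(x, y) \<in> K2 A \<longleftrightarrow> (\<forall>e\<in>A. (x - fst e)\<^sup>2 + (y - snd e)\<^sup>2 \<le> 1)"
  unfolding K2_def using in_cball_iff' by auto

lemma disc_iff:
  fixes x a y b :: real
  assumes "\<bar>x - a\<bar> \<le> 1"
  shows "(x - a)\<^sup>2 + (y - b)\<^sup>2 \<le> 1 \<longleftrightarrow> b - RR a x \<le> y \<and> y \<le> b + RR a x"
proof -
  have R0: "RR a x \<ge> 0" unfolding RR_def using assms by (simp add: abs_square_le_1)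
  have R2: "(RR a x)\<^sup>2 = 1 - (x - a)\<^sup>2" using RR_sq[OF assms] .
  have "(x - a)\<^sup>2 + (y - b)\<^sup>2 \<le> 1 \<longleftrightarrow> (y - b)\<^sup>2 \<le> (RR a x)\<^sup>2" using R2 by linarith
  also have "\<dots> \<longleftrightarrow> \<bar>y - b\<bar> \<le> \<bar>RR a x\<bar>" using abs_le_square_iff by blast
  also have "\<dots> \<longleftrightarrow> \<bar>y - b\<bar> \<le> RR a x" using R0 by simp
  also have "\<dots> \<longleftrightarrow> b - RR a x \<le> y \<and> y \<le> b + RR a x" by (simp add: abs_le_iff) linarith
  finally show ?thesis .
qed

lemma disc_xbound: "((x::real) - a)\<^sup>2 + (y - b)\<^sup>2 \<le> 1 \<Longrightarrow> \<bar>x - a\<bar> \<le> 1"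
proof -
  assume h: "(x - a)\<^sup>2 + ((y::real) - b)\<^sup>2 \<le> 1"
  have "(x - a)\<^sup>2 \<le> 1" using h zero_le_power2[of "y - b"] by linarith
  then show ?thesis by (simp add: abs_square_le_1)
qed

lemma sec_bounds:
  assumes "y \<in> sec2 A x" "e \<in> A"
  shows "\<bar>x - fst e\<bar> \<le> 1" "snd e - RR (fst e) x \<le> y" "y \<le> snd e + RR (fst e) x"
proof -
  have h: "(x - fst e)\<^sup>2 + (y - snd e)\<^sup>2 \<le> 1" using assms unfolding sec2_def K2_iff by auto
  show xb: "\<bar>x - fst e\<bar> \<le> 1" by (rule disc_xbound[OF h])
  show "snd e - RR (fst e) x \<le> y" "y \<le> snd e + RR (fst e) x" using disc_iff[OF xb] h by auto
qed

lemma I2_iff: "x \<in> I2 A \<longleftrightarrow> sec2 A x \<noteq> {}"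
  unfolding I2_def sec2_def by force

lemma H_bound:
  assumes x: "x \<in> I2 A" and c: "c \<in> A" and d: "d \<in> A"
  shows "H2 A x \<le> ((snd c + RR (fst c) x) - (snd d - RR (fst d) x)) / 2"
    and "Inf (sec2 A x) \<le> Sup (sec2 A x)"
    and "\<bar>x - fst c\<bar> \<le> 1"
proof -
  have ne: "sec2 A x \<noteq> {}" using x I2_iff by blast
  have ub: "\<And>y. y \<in> sec2 A x \<Longrightarrow> y \<le> snd c + RR (fst c) x" using sec_bounds(3) c by blast
  have lb: "\<And>y. y \<in> sec2 A x \<Longrightarrow> snd d - RR (fst d) x \<le> y" using sec_bounds(2) d by blast
  have bdd1: "bdd_above (sec2 A x)" by (rule bdd_aboveI[where M="snd c + RR (fst c) x"]) (rule ub)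
  have bdd2: "bdd_below (sec2 A x)" by (rule bdd_belowI[where m="snd d - RR (fst d) x"]) (rule lb)
  have S: "Sup (sec2 A x) \<le> snd c + RR (fst c) x" using ne ub by (intro cSup_least) auto
  have I: "snd d - RR (fst d) x \<le> Inf (sec2 A x)" using ne lb by (intro cInf_greatest) auto
  show IS: "Inf (sec2 A x) \<le> Sup (sec2 A x)" using ne bdd1 bdd2 by (rule cInf_le_cSup)
  show "H2 A x \<le> ((snd c + RR (fst c) x) - (snd d - RR (fst d) x)) / 2"
    unfolding H2_def using S I IS by simp
  obtain y where "y \<in> sec2 A x" using ne by auto
  then show "\<bar>x - fst c\<bar> \<le> 1" using sec_bounds(1) c by blast
qed

lemma H_nonneg: "H2 A x \<ge> 0" unfolding H2_def by simp

lemma S2_sym: "(x, y) \<in> S2 A \<Longrightarrow> (x, - y) \<in> S2 A"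
  unfolding S2_def by simp

lemma S_sub_axisdisc:
  assumes e: "e \<in> A"
  shows "S2 A \<subseteq> cball (fst e, 0) 1"
proof
  fix z assume z: "z \<in> S2 A"
  obtain x y where zxy: "z = (x, y)" by (cases z)
  have x: "x \<in> I2 A" and y: "\<bar>y\<bar> \<le> H2 A x" using z zxy unfolding S2_def by auto
  have xb: "\<bar>x - fst e\<bar> \<le> 1" using H_bound(3)[OF x e e] .
  have "H2 A x \<le> ((snd e + RR (fst e) x) - (snd e - RR (fst e) x)) / 2" using H_bound(1)[OF x e e] .
  then have "\<bar>y\<bar> \<le> RR (fst e) x" using y by simp
  then have "(x - fst e)\<^sup>2 + (y - 0)\<^sup>2 \<le> 1" using disc_iff[OF xb, of y 0] by (simp add: abs_le_iff)
  then show "z \<in> cball (fst e, 0) 1" unfolding zxy in_cball_iff .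
qed




lemma sq_le_of_abs:
  fixes u r :: real
  assumes "\<bar>u\<bar> \<le> r"
  shows "u\<^sup>2 \<le> r\<^sup>2"
proof -
  have "\<bar>u\<bar> \<le> \<bar>r\<bar>" using assms by linarith
  then show ?thesis using abs_le_square_iff by blast
qed

lemma TD:
  assumes c: "c \<in> A" and d: "d \<in> A"
    and hc: "\<bar>x1 - fst c\<bar> < 1" and hd: "\<bar>x1 - fst d\<bar> < 1"
    and top: "(x1, snd c + RR (fst c) x1) \<in> K2 A"
    and bot: "(x1, snd d - RR (fst d) x1) \<in> K2 A"
    and L0: "snd d - RR (fst d) x1 \<le> snd c + RR (fst c) x1"
  shows "S2 A \<subseteq> cball (x1 + Phi (fst c) (fst d) x1,
      (snd c - snd d) / 2 + GG (fst c) (fst d) x1 - 1 / sqrt (1 + (PP (fst c) (fst d) x1)\<^sup>2)) 1"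
proof
  define ca where "ca = fst c"
  define cb where "cb = snd c"
  define da where "da = fst d"
  define db where "db = snd d"
  define ny where "ny = 1 / sqrt (1 + (PP ca da x1)\<^sup>2)"
  define C1 where "C1 = x1 + Phi ca da x1"
  define C2 where "C2 = (cb - db) / 2 + GG ca da x1 - ny"
  fix z assume z: "z \<in> S2 A"
  obtain x y where zxy: "z = (x, y)" by (cases z)
  have x: "x \<in> I2 A" and y: "\<bar>y\<bar> \<le> H2 A x" using z zxy unfolding S2_def by auto
  have xb1: "\<bar>x - ca\<bar> \<le> 1" unfolding ca_def using H_bound(3)[OF x c c] .
  have xb2: "\<bar>x - da\<bar> \<le> 1" unfolding da_def using H_bound(3)[OF x d d] .
  have T: "\<bar>x - C1\<bar> \<le> 1 \<and> GG ca da x - GG ca da x1 \<le> sqrt (1 - (x - C1)\<^sup>2) - ny"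
    unfolding C1_def ny_def by (rule Tfull) (use hc hd xb1 xb2 in \<open>auto simp: ca_def da_def\<close>)
  have Hx: "H2 A x \<le> (cb - db) / 2 + GG ca da x"
    using H_bound(1)[OF x c d] unfolding GG_def ca_def cb_def da_def db_def by (simp add: field_simps)
  have P1: "(x1 - ca)\<^sup>2 + ((db - RR da x1) - cb)\<^sup>2 \<le> 1"
    using bot c unfolding K2_iff ca_def cb_def da_def db_def by auto
  have P2: "(x1 - da)\<^sup>2 + ((cb + RR ca x1) - db)\<^sup>2 \<le> 1"
    using top d unfolding K2_iff ca_def cb_def da_def db_def by auto
  have ch: "((cb + RR ca x1) - (db - RR da x1)) / 2 \<le> ny"
    unfolding ny_def by (rule chord) (use hc hd L0 P1 P2 in \<open>auto simp: ca_def cb_def da_def db_def\<close>)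
  have C2le: "C2 \<le> 0" using ch unfolding C2_def GG_def by (simp add: field_simps)
  define \<rho> where "\<rho> = sqrt (1 - (x - C1)\<^sup>2)"
  have \<rho>0: "\<rho> \<ge> 0" unfolding \<rho>_def using T by (simp add: abs_square_le_1)
  have \<rho>2: "\<rho>\<^sup>2 = 1 - (x - C1)\<^sup>2" unfolding \<rho>_def using T by (simp add: abs_square_le_1)
  have yb: "\<bar>y\<bar> \<le> C2 + \<rho>" using y Hx T unfolding C2_def \<rho>_def by linarith
  have "\<bar>y - C2\<bar> \<le> \<rho>" using yb C2le by (simp add: abs_le_iff)
  then have "(y - C2)\<^sup>2 \<le> \<rho>\<^sup>2" by (rule sq_le_of_abs)
  then have "(x - C1)\<^sup>2 + (y - C2)\<^sup>2 \<le> 1" using \<rho>2 by linarith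
  then show "z \<in> cball (x1 + Phi (fst c) (fst d) x1,
      (snd c - snd d) / 2 + GG (fst c) (fst d) x1 - 1 / sqrt (1 + (PP (fst c) (fst d) x1)\<^sup>2)) 1"
    unfolding zxy in_cball_iff C1_def C2_def ny_def ca_def cb_def da_def db_def .
qed

lemma cont_up: "continuous_on A (\<lambda>e::real\<times>real. snd e + RR (fst e) x0)"
  unfolding RR_def by (intro continuous_intros)

lemma cont_lo: "continuous_on A (\<lambda>e::real\<times>real. snd e - RR (fst e) x0)"
  unfolding RR_def by (intro continuous_intros)

lemma extremal:
  assumes "compact A" "A \<noteq> {}"
  shows "\<exists>c\<in>A. \<forall>e\<in>A. snd c + RR (fst c) x0 \<le> snd e + RR (fst e) x0"
    and "\<exists>d\<in>A. \<forall>e\<in>A. snd e - RR (fst e) x0 \<le> snd d - RR (fst d) x0"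
  by (rule continuous_attains_inf[OF assms cont_up], rule continuous_attains_sup[OF assms cont_lo])

lemma sec_eq:
  assumes all: "\<forall>e\<in>A. \<bar>x0 - fst e\<bar> \<le> 1" and c: "c \<in> A" and d: "d \<in> A"
    and cmin: "\<forall>e\<in>A. snd c + RR (fst c) x0 \<le> snd e + RR (fst e) x0"
    and dmax: "\<forall>e\<in>A. snd e - RR (fst e) x0 \<le> snd d - RR (fst d) x0"
  shows "sec2 A x0 = {snd d - RR (fst d) x0 .. snd c + RR (fst c) x0}"
proof -
  have "y \<in> sec2 A x0 \<longleftrightarrow> (\<forall>e\<in>A. snd e - RR (fst e) x0 \<le> y \<and> y \<le> snd e + RR (fst e) x0)" for y
  proof -
    have "\<forall>e\<in>A. ((x0 - fst e)\<^sup>2 + (y - snd e)\<^sup>2 \<le> 1 \<longleftrightarrow> snd e - RR (fst e) x0 \<le> y \<and> y \<le> snd e + RR (fst e) x0)"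
    proof
      fix e assume "e \<in> A"
      then have "\<bar>x0 - fst e\<bar> \<le> 1" using all by blast
      from disc_iff[OF this] show "(x0 - fst e)\<^sup>2 + (y - snd e)\<^sup>2 \<le> 1 \<longleftrightarrow> snd e - RR (fst e) x0 \<le> y \<and> y \<le> snd e + RR (fst e) x0" .
    qed
    then show ?thesis unfolding sec2_def mem_Collect_eq K2_iff by blast
  qed
  also have "\<dots> y \<longleftrightarrow> snd d - RR (fst d) x0 \<le> y \<and> y \<le> snd c + RR (fst c) x0" for y
  proof
    assume "\<forall>e\<in>A. snd e - RR (fst e) x0 \<le> y \<and> y \<le> snd e + RR (fst e) x0"
    then show "snd d - RR (fst d) x0 \<le> y \<and> y \<le> snd c + RR (fst c) x0" using c d by blast
  next
    assume h: "snd d - RR (fst d) x0 \<le> y \<and> y \<le> snd c + RR (fst c) x0"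
    show "\<forall>e\<in>A. snd e - RR (fst e) x0 \<le> y \<and> y \<le> snd e + RR (fst e) x0"
    proof
      fix e assume e: "e \<in> A"
      have "snd e - RR (fst e) x0 \<le> snd d - RR (fst d) x0" using dmax e by blast
      moreover have "snd c + RR (fst c) x0 \<le> snd e + RR (fst e) x0" using cmin e by blast
      ultimately show "snd e - RR (fst e) x0 \<le> y \<and> y \<le> snd e + RR (fst e) x0" using h by linarith
    qed
  qed
  finally show ?thesis by (simp add: set_eq_iff)
qed

lemma tip0:
  assumes A: "compact A" "A \<noteq> {}" and beta: "\<beta> \<in> I2 A" and bmax: "\<forall>x\<in>I2 A. x \<le> \<beta>"
    and c: "c \<in> A" and d: "d \<in> A"
    and cmin: "\<forall>e\<in>A. snd c + RR (fst c) \<beta> \<le> snd e + RR (fst e) \<beta>"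
    and dmax: "\<forall>e\<in>A. snd e - RR (fst e) \<beta> \<le> snd d - RR (fst d) \<beta>"
  shows "snd c + RR (fst c) \<beta> \<le> snd d - RR (fst d) \<beta>"
proof (rule ccontr)
  assume "\<not> ?thesis"
  then have lt: "snd d - RR (fst d) \<beta> < snd c + RR (fst c) \<beta>" by simp
  have all: "\<forall>e\<in>A. \<bar>\<beta> - fst e\<bar> \<le> 1" using H_bound(3)[OF beta] by blast
  define m where "m = ((snd d - RR (fst d) \<beta>) + (snd c + RR (fst c) \<beta>)) / 2"
  define F where "F = (\<lambda>e::real\<times>real. (\<beta> - fst e)\<^sup>2 + (m - snd e)\<^sup>2)"
  have Flt: "F e < 1" if e: "e \<in> A" for e
  proof -
    have eb: "\<bar>\<beta> - fst e\<bar> \<le> 1" using all e by blast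
    have "snd e - RR (fst e) \<beta> < m" "m < snd e + RR (fst e) \<beta>"
      using cmin dmax e lt unfolding m_def by (auto simp: field_simps)
    then have "\<bar>m - snd e\<bar> < RR (fst e) \<beta>" by (simp add: abs_less_iff)
    then have "\<bar>m - snd e\<bar>\<^sup>2 < (RR (fst e) \<beta>)\<^sup>2"
      by (intro power_strict_mono) auto
    then have "(m - snd e)\<^sup>2 < (RR (fst e) \<beta>)\<^sup>2" by simp
    then show ?thesis unfolding F_def using RR_sq[OF eb] by linarith
  qed
  have contF: "continuous_on A F" unfolding F_def by (intro continuous_intros)
  obtain es where es: "es \<in> A" and esmax: "\<forall>e\<in>A. F e \<le> F es"
    using continuous_attains_sup[OF A contF] by blast
  define \<delta> where "\<delta> = 1 - F es"
  have \<delta>pos: "\<delta> > 0" unfolding \<delta>_def using Flt[OF es] by simp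
  have \<delta>le: "\<delta> \<le> 1" unfolding \<delta>_def F_def by (simp add: add_nonneg_nonneg)
  define \<epsilon> where "\<epsilon> = \<delta> / 3"
  have \<epsilon>pos: "\<epsilon> > 0" unfolding \<epsilon>_def using \<delta>pos by simp
  have "(\<beta> + \<epsilon>, m) \<in> K2 A"
    unfolding K2_iff
  proof
    fix e assume e: "e \<in> A"
    have eb: "\<beta> - fst e \<le> 1" using all e by (auto simp: abs_le_iff)
    have expand: "(\<beta> + \<epsilon> - fst e)\<^sup>2 + (m - snd e)\<^sup>2 = F e + 2 * \<epsilon> * (\<beta> - fst e) + \<epsilon>\<^sup>2"
      unfolding F_def by (simp add: power2_eq_square algebra_simps)
    have "2 * \<epsilon> * (\<beta> - fst e) \<le> 2 * \<epsilon> * 1" using eb \<epsilon>pos by (intro mult_left_mono) auto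
    moreover have "\<epsilon>\<^sup>2 \<le> \<epsilon> / 3"
    proof -
      have "\<epsilon> \<le> 1 / 3" unfolding \<epsilon>_def using \<delta>le by simp
      then have "\<epsilon> * \<epsilon> \<le> \<epsilon> * (1 / 3)" using \<epsilon>pos by (intro mult_left_mono) auto
      then show ?thesis by (simp add: power2_eq_square)
    qed
    moreover have "F e \<le> F es" using esmax e by blast
    ultimately show "(\<beta> + \<epsilon> - fst e)\<^sup>2 + (m - snd e)\<^sup>2 \<le> 1"
      unfolding expand using \<delta>_def \<epsilon>_def \<delta>pos by linarith
  qed
  then have "\<beta> + \<epsilon> \<in> I2 A" unfolding I2_def by force
  then have "\<beta> + \<epsilon> \<le> \<beta>" using bmax by blast
  then show False using \<epsilon>pos by simp
qed




lemma K2_compact: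
  assumes "A \<noteq> {}" shows "compact (K2 A)"
proof -
  obtain e where e: "e \<in> A" using assms by blast
  have "K2 A \<subseteq> cball e 1" unfolding K2_def using e by blast
  then have "bounded (K2 A)" using bounded_cball bounded_subset by blast
  moreover have "closed (K2 A)" unfolding K2_def by (intro closed_INT) auto
  ultimately show ?thesis using compact_eq_bounded_closed by blast
qed

lemma I2_compact: "A \<noteq> {} \<Longrightarrow> compact (I2 A)"
  unfolding I2_def by (rule compact_continuous_image[OF _ K2_compact]) (intro continuous_intros)

lemma I2_convex: "convex (I2 A)"
proof -
  have "convex (K2 A)" unfolding K2_def by (intro convex_INT) auto
  then show ?thesis unfolding I2_def by (rule convex_linear_image[OF linear_fst])
qed

lemma I2_between: "a \<in> I2 A \<Longrightarrow> b \<in> I2 A \<Longrightarrow> a \<le> x \<Longrightarrow> x \<le> b \<Longrightarrow> x \<in> I2 A"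
  using I2_convex[of A] unfolding is_interval_convex_1[symmetric] is_interval_1 by blast

lemma I2_max:
  assumes "A \<noteq> {}" "K2 A \<noteq> {}"
  shows "\<exists>\<beta>\<in>I2 A. \<forall>x\<in>I2 A. x \<le> \<beta>"
  using compact_attains_sup[OF I2_compact[OF assms(1)]] assms(2) unfolding I2_def by blast

lemma H_eq:
  assumes "sec2 A x = {l .. u}" "l \<le> u"
  shows "H2 A x = (u - l) / 2"
  unfolding H2_def assms(1) using assms(2) by simp

lemma not_in_cball: "1 < ((x::real) - a)\<^sup>2 + (y - b)\<^sup>2 \<Longrightarrow> (x, y) \<notin> cball (a, b) 1"
  unfolding in_cball_iff by simp

lemma sq_gt1: "1 < \<bar>u::real\<bar> \<Longrightarrow> 1 < u\<^sup>2"
  using abs_square_le_1[of u] by linarith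

lemma Phi_ny: "(Phi a1 a2 t)\<^sup>2 + (1 / sqrt (1 + (PP a1 a2 t)\<^sup>2))\<^sup>2 = 1"
proof -
  have "(Phi a1 a2 t)\<^sup>2 < 1" using Phi_abs_lt[of a1 a2 t] abs_square_less_1 by blast
  then have "(sqrt (1 - (Phi a1 a2 t)\<^sup>2))\<^sup>2 = 1 - (Phi a1 a2 t)\<^sup>2" by simp
  then show ?thesis unfolding sqrt_one_minus_Phi by simp
qed

lemma ny_pos: "1 / sqrt (1 + (PP a1 a2 t)\<^sup>2) > 0"
  by (simp add: add_pos_nonneg)

lemma case_inside:
  assumes A: "compact A" "A \<noteq> {}" and all: "\<forall>e\<in>A. \<bar>x0 - fst e\<bar> \<le> 1"
    and x0: "x0 \<in> I2 A" and p: "(x0, y0) \<notin> S2 A" and y0: "y0 \<ge> 0"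
  shows "\<exists>C. S2 A \<subseteq> cball C 1 \<and> (x0, y0) \<notin> cball C 1"
proof -
  obtain c where c: "c \<in> A" and cmin: "\<forall>e\<in>A. snd c + RR (fst c) x0 \<le> snd e + RR (fst e) x0"
    using extremal(1)[OF A] by blast
  obtain d where d: "d \<in> A" and dmax: "\<forall>e\<in>A. snd e - RR (fst e) x0 \<le> snd d - RR (fst d) x0"
    using extremal(2)[OF A] by blast
  define lo where "lo = snd d - RR (fst d) x0"
  define up where "up = snd c + RR (fst c) x0"
  have sec: "sec2 A x0 = {lo .. up}" unfolding lo_def up_def by (rule sec_eq[OF all c d cmin dmax])
  have le: "lo \<le> up" using x0 sec I2_iff by fastforce
  have H: "H2 A x0 = (up - lo) / 2" by (rule H_eq[OF sec le])
  have yH: "y0 > H2 A x0" using p x0 y0 unfolding S2_def by auto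
  show ?thesis
  proof (cases "\<bar>x0 - fst c\<bar> < 1 \<and> \<bar>x0 - fst d\<bar> < 1")
    case True
    have top: "(x0, snd c + RR (fst c) x0) \<in> K2 A"
      using sec le unfolding sec2_def up_def by (simp add: set_eq_iff)
    have bot: "(x0, snd d - RR (fst d) x0) \<in> K2 A"
      using sec le unfolding sec2_def lo_def by (simp add: set_eq_iff)
    have L0: "snd d - RR (fst d) x0 \<le> snd c + RR (fst c) x0" using le unfolding lo_def up_def .
    define ny where "ny = 1 / sqrt (1 + (PP (fst c) (fst d) x0)\<^sup>2)"
    define C where "C = (x0 + Phi (fst c) (fst d) x0, (snd c - snd d) / 2 + GG (fst c) (fst d) x0 - ny)"
    have sub: "S2 A \<subseteq> cball C 1" unfolding C_def ny_def
      using TD[OF c d _ _ top bot L0] True by blast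
    have g: "(snd c - snd d) / 2 + GG (fst c) (fst d) x0 = H2 A x0"
      unfolding H up_def lo_def GG_def by (simp add: field_simps)
    have nyp: "ny > 0" unfolding ny_def by (rule ny_pos)
    have "ny < y0 - ((snd c - snd d) / 2 + GG (fst c) (fst d) x0 - ny)" using g yH by linarith
    then have "ny\<^sup>2 < (y0 - ((snd c - snd d) / 2 + GG (fst c) (fst d) x0 - ny))\<^sup>2"
      using nyp by (intro power_strict_mono) auto
    moreover have "(Phi (fst c) (fst d) x0)\<^sup>2 + ny\<^sup>2 = 1" unfolding ny_def by (rule Phi_ny)
    ultimately have "1 < (x0 - (x0 + Phi (fst c) (fst d) x0))\<^sup>2 + (y0 - ((snd c - snd d) / 2 + GG (fst c) (fst d) x0 - ny))\<^sup>2"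
      by simp
    then have "(x0, y0) \<notin> cball C 1" unfolding C_def by (rule not_in_cball)
    then show ?thesis using sub by blast
  next
    case False
    then obtain e where e: "e \<in> A" and e1: "\<bar>x0 - fst e\<bar> = 1"
      using all c d by (metis abs_le_iff abs_less_iff less_eq_real_def)
    have "0 \<le> H2 A x0" by (rule H_nonneg)
    then have "0 < y0\<^sup>2" using yH by simp
    moreover have "(x0 - fst e)\<^sup>2 = 1" using e1 by (metis abs_power2 one_power2 power2_abs)
    ultimately have "1 < (x0 - fst e)\<^sup>2 + (y0 - 0)\<^sup>2" by simp
    then have "(x0, y0) \<notin> cball (fst e, 0) 1" by (rule not_in_cball)
    then show ?thesis using S_sub_axisdisc[OF e] by blast
  qed
qed

lemma case_tip:
  assumes A: "compact A" "A \<noteq> {}" and beta: "\<beta> \<in> I2 A" and bmax: "\<forall>x\<in>I2 A. x \<le> \<beta>"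
    and x0: "\<beta> < x0" and y0: "y0 \<ge> 0"
  shows "\<exists>C. S2 A \<subseteq> cball C 1 \<and> (x0, y0) \<notin> cball C 1"
proof -
  have all: "\<forall>e\<in>A. \<bar>\<beta> - fst e\<bar> \<le> 1" using H_bound(3)[OF beta] by blast
  obtain c where c: "c \<in> A" and cmin: "\<forall>e\<in>A. snd c + RR (fst c) \<beta> \<le> snd e + RR (fst e) \<beta>"
    using extremal(1)[OF A] by blast
  obtain d where d: "d \<in> A" and dmax: "\<forall>e\<in>A. snd e - RR (fst e) \<beta> \<le> snd d - RR (fst d) \<beta>"
    using extremal(2)[OF A] by blast
  define lo where "lo = snd d - RR (fst d) \<beta>"
  define up where "up = snd c + RR (fst c) \<beta>"
  have sec: "sec2 A \<beta> = {lo .. up}" unfolding lo_def up_def by (rule sec_eq[OF all c d cmin dmax])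
  have le: "lo \<le> up" using beta sec I2_iff by fastforce
  have ge: "up \<le> lo" unfolding up_def lo_def by (rule tip0[OF A beta bmax c d cmin dmax])
  have Hb: "H2 A \<beta> = 0" using H_eq[OF sec le] ge le by simp
  show ?thesis
  proof (cases "\<exists>x\<in>I2 A. x < \<beta>")
    case False
    have sub: "S2 A \<subseteq> cball (\<beta> - 1, 0) 1"
    proof
      fix z assume z: "z \<in> S2 A"
      obtain x y where zxy: "z = (x, y)" by (cases z)
      have x: "x \<in> I2 A" and y: "\<bar>y\<bar> \<le> H2 A x" using z zxy unfolding S2_def by auto
      have "x = \<beta>" using x False bmax by force
      then have "y = 0" using y Hb by simp
      then show "z \<in> cball (\<beta> - 1, 0) 1" unfolding zxy in_cball_iff using \<open>x = \<beta>\<close> by simp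
    qed
    have "1 < \<bar>x0 - (\<beta> - 1)\<bar>" using x0 by simp
    then have "1 < (x0 - (\<beta> - 1))\<^sup>2" by (rule sq_gt1)
    then have "1 < (x0 - (\<beta> - 1))\<^sup>2 + y0\<^sup>2" using zero_le_power2[of y0] by linarith
    then have "1 < (x0 - (\<beta> - 1))\<^sup>2 + (y0 - 0)\<^sup>2" by simp
    then show ?thesis using sub not_in_cball by blast
  next
    case True
    then obtain xl where xl: "xl \<in> I2 A" "xl < \<beta>" by blast
    show ?thesis
    proof (cases "\<bar>\<beta> - fst c\<bar> < 1 \<and> \<bar>\<beta> - fst d\<bar> < 1")
      case False
      then obtain e where e: "e \<in> A" and e1: "\<bar>\<beta> - fst e\<bar> = 1"
        using all c d by (metis abs_le_iff abs_less_iff less_eq_real_def)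
      have "\<bar>xl - fst e\<bar> \<le> 1" using H_bound(3)[OF xl(1) e e] .
      then have fe: "fst e = \<beta> - 1" using e1 xl(2) by (auto simp: abs_if split: if_splits)
      have "1 < \<bar>x0 - fst e\<bar>" using x0 fe by simp
      then have "1 < (x0 - fst e)\<^sup>2" by (rule sq_gt1)
      then have "1 < (x0 - fst e)\<^sup>2 + y0\<^sup>2" using zero_le_power2[of y0] by linarith
      then have "1 < (x0 - fst e)\<^sup>2 + (y0 - 0)\<^sup>2" by simp
      then show ?thesis using S_sub_axisdisc[OF e] not_in_cball by blast
    next
      case True
      have top: "(\<beta>, snd c + RR (fst c) \<beta>) \<in> K2 A"
        using sec le unfolding sec2_def up_def by (simp add: set_eq_iff)
      have bot: "(\<beta>, snd d - RR (fst d) \<beta>) \<in> K2 A"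
        using sec le unfolding sec2_def lo_def by (simp add: set_eq_iff)
      have L0: "snd d - RR (fst d) \<beta> \<le> snd c + RR (fst c) \<beta>" using le unfolding lo_def up_def .
      define ny where "ny = 1 / sqrt (1 + (PP (fst c) (fst d) \<beta>)\<^sup>2)"
      define ph where "ph = Phi (fst c) (fst d) \<beta>"
      define C where "C = (\<beta> + ph, (snd c - snd d) / 2 + GG (fst c) (fst d) \<beta> - ny)"
      have sub: "S2 A \<subseteq> cball C 1" unfolding C_def ny_def ph_def
        using TD[OF c d _ _ top bot L0] True by blast
      define gf where "gf = (\<lambda>t. (snd c - snd d) / 2 + GG (fst c) (fst d) t)"
      have g0: "gf \<beta> = 0" unfolding gf_def GG_def using ge le unfolding up_def lo_def by (simp add: field_simps)
      have PPle: "PP (fst c) (fst d) \<beta> \<le> 0"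
      proof (rule ccontr)
        assume "\<not> ?thesis"
        then have pos: "PP (fst c) (fst d) \<beta> > 0" by simp
        have "DERIV gf \<beta> :> PP (fst c) (fst d) \<beta>"
          unfolding gf_def using True by (auto intro!: derivative_eq_intros deriv_GG)
        from DERIV_pos_inc_left[OF this pos] obtain \<delta> where \<delta>: "\<delta> > 0"
          and dec: "\<forall>h>0. h < \<delta> \<longrightarrow> gf (\<beta> - h) < gf \<beta>" by blast
        define h where "h = min (\<delta> / 2) (\<beta> - xl)"
        have h0: "h > 0" "h < \<delta>" unfolding h_def using \<delta> xl by auto
        have "gf (\<beta> - h) < 0" using dec h0 g0 by auto
        moreover have t: "\<beta> - h \<in> I2 A"
          by (rule I2_between[OF xl(1) beta]) (use \<delta> xl in \<open>auto simp: h_def\<close>)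
        have "H2 A (\<beta> - h) \<le> gf (\<beta> - h)"
          using H_bound(1)[OF t c d] unfolding gf_def GG_def by (simp add: field_simps)
        ultimately show False using H_nonneg[of A "\<beta> - h"] by linarith
      qed
      have phle: "ph \<le> 0" unfolding ph_def Phi_def using PPle
        by (simp add: divide_nonpos_pos add_pos_nonneg)
      have nyp: "ny > 0" unfolding ny_def by (rule ny_pos)
      have "\<bar>ph\<bar> < x0 - (\<beta> + ph)" using phle x0 by simp
      then have "ph\<^sup>2 < (x0 - (\<beta> + ph))\<^sup>2"
        using power_strict_mono[of "\<bar>ph\<bar>" "x0 - (\<beta> + ph)" 2] by simp
      moreover have "ny\<^sup>2 \<le> (y0 - (gf \<beta> - ny))\<^sup>2" using g0 y0 nyp by (intro power_mono) auto
      moreover have "ph\<^sup>2 + ny\<^sup>2 = 1" unfolding ph_def ny_def by (rule Phi_ny)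
      ultimately have "1 < (x0 - (\<beta> + ph))\<^sup>2 + (y0 - (gf \<beta> - ny))\<^sup>2" by linarith
      then have "(x0, y0) \<notin> cball C 1" unfolding C_def gf_def by (rule not_in_cball)
      then show ?thesis using sub by blast
    qed
  qed
qed

lemma core_right:
  assumes A: "compact A" "A \<noteq> {}" and K: "K2 A \<noteq> {}"
    and p: "(x0, y0) \<notin> S2 A" and y0: "y0 \<ge> 0" and left: "\<exists>x'\<in>I2 A. x' \<le> x0"
  shows "\<exists>C. S2 A \<subseteq> cball C 1 \<and> (x0, y0) \<notin> cball C 1"
proof -
  obtain \<beta> where beta: "\<beta> \<in> I2 A" and bmax: "\<forall>x\<in>I2 A. x \<le> \<beta>" using I2_max[OF A(2) K] by blast
  show ?thesis
  proof (cases "\<exists>e\<in>A. 1 < \<bar>x0 - fst e\<bar>")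
    case True
    then obtain e where e: "e \<in> A" and e1: "1 < \<bar>x0 - fst e\<bar>" by blast
    have "1 < (x0 - fst e)\<^sup>2" using e1 by (rule sq_gt1)
    then have "1 < (x0 - fst e)\<^sup>2 + y0\<^sup>2" using zero_le_power2[of y0] by linarith
    then have "1 < (x0 - fst e)\<^sup>2 + (y0 - 0)\<^sup>2" by simp
    then show ?thesis using S_sub_axisdisc[OF e] not_in_cball by blast
  next
    case False
    then have all: "\<forall>e\<in>A. \<bar>x0 - fst e\<bar> \<le> 1" by (simp add: not_less)
    show ?thesis
    proof (cases "x0 \<le> \<beta>")
      case True
      obtain x' where "x' \<in> I2 A" "x' \<le> x0" using left by blast
      then have "x0 \<in> I2 A" using I2_between[OF _ beta _ True] by blast
      then show ?thesis using case_inside[OF A all _ p y0] by blast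
    next
      case False
      then show ?thesis using case_tip[OF A beta bmax _ y0] by simp
    qed
  qed
qed

lemma core_half:
  assumes A: "compact A" "A \<noteq> {}" and K: "K2 A \<noteq> {}"
    and p: "(x0, y0) \<notin> S2 A" and left: "\<exists>x'\<in>I2 A. x' \<le> x0"
  shows "\<exists>C. S2 A \<subseteq> cball C 1 \<and> (x0, y0) \<notin> cball C 1"
proof (cases "y0 \<ge> 0")
  case True
  then show ?thesis using core_right[OF A K p _ left] by blast
next
  case False
  have p': "(x0, - y0) \<notin> S2 A" using p S2_sym[of x0 "- y0" A] by auto
  obtain C where sub: "S2 A \<subseteq> cball C 1" and out: "(x0, - y0) \<notin> cball C 1"
    using core_right[OF A K p' _ left] False by auto
  have sub': "S2 A \<subseteq> cball (fst C, - snd C) 1"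
  proof
    fix z assume z: "z \<in> S2 A"
    obtain x y where zxy: "z = (x, y)" by (cases z)
    have "(x, - y) \<in> S2 A" using z zxy S2_sym by blast
    then have "(x, - y) \<in> cball (fst C, snd C) 1" using sub by auto
    then have "(x - fst C)\<^sup>2 + (- y - snd C)\<^sup>2 \<le> 1" unfolding in_cball_iff .
    moreover have "(- y - snd C)\<^sup>2 = (y - - snd C)\<^sup>2" by (simp add: power2_eq_square algebra_simps)
    ultimately show "z \<in> cball (fst C, - snd C) 1" unfolding zxy in_cball_iff by simp
  qed
  have "\<not> (x0 - fst C)\<^sup>2 + (- y0 - snd C)\<^sup>2 \<le> 1" using out in_cball_iff[of x0 "- y0" "fst C" "snd C"] by simp
  moreover have "(- y0 - snd C)\<^sup>2 = (y0 - - snd C)\<^sup>2" by (simp add: power2_eq_square algebra_simps)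
  ultimately have "(x0, y0) \<notin> cball (fst C, - snd C) 1" unfolding in_cball_iff by simp
  then show ?thesis using sub' by blast
qed

definition reflx :: "real \<times> real \<Rightarrow> real \<times> real" where "reflx z = (- fst z, snd z)"

lemma K2_refl: "(x, y) \<in> K2 (reflx ` A) \<longleftrightarrow> (- x, y) \<in> K2 A"
proof -
  have "(x - fst (reflx e))\<^sup>2 + (y - snd (reflx e))\<^sup>2 = (- x - fst e)\<^sup>2 + (y - snd e)\<^sup>2" for e
    unfolding reflx_def by (simp add: power2_eq_square algebra_simps)
  then show ?thesis unfolding K2_iff by auto
qed

lemma sec_refl: "sec2 (reflx ` A) x = sec2 A (- x)"
  unfolding sec2_def using K2_refl by auto

lemma I2_refl: "x \<in> I2 (reflx ` A) \<longleftrightarrow> - x \<in> I2 A"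
  unfolding I2_iff sec_refl ..

lemma H2_refl: "H2 (reflx ` A) x = H2 A (- x)"
  unfolding H2_def sec_refl ..

lemma S2_refl: "(x, y) \<in> S2 (reflx ` A) \<longleftrightarrow> (- x, y) \<in> S2 A"
  unfolding S2_def using I2_refl H2_refl by auto

lemma core_full:
  assumes A: "compact A" "A \<noteq> {}" and K: "K2 A \<noteq> {}"
    and p: "(x0, y0) \<notin> S2 A"
  shows "\<exists>C. S2 A \<subseteq> cball C 1 \<and> (x0, y0) \<notin> cball C 1"
proof (cases "\<exists>x'\<in>I2 A. x' \<le> x0")
  case True
  then show ?thesis using core_half[OF A K p] by blast
next
  case False
  have A': "compact (reflx ` A)"
    unfolding reflx_def by (rule compact_continuous_image[OF _ A(1)]) (intro continuous_intros)
  have A'ne: "reflx ` A \<noteq> {}" using A(2) by simp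
  obtain k where k: "k \<in> K2 A" using K by blast
  have "(- fst k, snd k) \<in> K2 (reflx ` A)" using K2_refl[of "- fst k" "snd k" A] k by simp
  then have K': "K2 (reflx ` A) \<noteq> {}" by blast
  have p': "(- x0, y0) \<notin> S2 (reflx ` A)" using p S2_refl by simp
  have "fst k \<in> I2 A" using k unfolding I2_def by blast
  then have "- (- fst k) \<in> I2 A" by simp
  then have "- fst k \<in> I2 (reflx ` A)" using I2_refl by blast
  moreover have "- fst k \<le> - x0" using False \<open>fst k \<in> I2 A\<close> by force
  ultimately have left: "\<exists>x'\<in>I2 (reflx ` A). x' \<le> - x0" by blast
  obtain C where sub: "S2 (reflx ` A) \<subseteq> cball C 1" and out: "(- x0, y0) \<notin> cball C 1"
    using core_half[OF A' A'ne K' p' left] by blast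
  have sub': "S2 A \<subseteq> cball (- fst C, snd C) 1"
  proof
    fix z assume z: "z \<in> S2 A"
    obtain x y where zxy: "z = (x, y)" by (cases z)
    have "(- x, y) \<in> S2 (reflx ` A)" using z zxy S2_refl[of "- x" y A] by simp
    then have "(- x, y) \<in> cball (fst C, snd C) 1" using sub by auto
    then have "(- x - fst C)\<^sup>2 + (y - snd C)\<^sup>2 \<le> 1" unfolding in_cball_iff .
    moreover have "(- x - fst C)\<^sup>2 = (x - - fst C)\<^sup>2" by (simp add: power2_eq_square algebra_simps)
    ultimately show "z \<in> cball (- fst C, snd C) 1" unfolding zxy in_cball_iff by simp
  qed
  have "\<not> (- x0 - fst C)\<^sup>2 + (y0 - snd C)\<^sup>2 \<le> 1" using out in_cball_iff[of "- x0" y0 "fst C" "snd C"] by simp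
  moreover have "(- x0 - fst C)\<^sup>2 = (x0 - - fst C)\<^sup>2" by (simp add: power2_eq_square algebra_simps)
  ultimately have "(x0, y0) \<notin> cball (- fst C, snd C) 1" unfolding in_cball_iff by simp
  then show ?thesis using sub' by blast
qed




lemma inner2: "(x::real^2) \<bullet> y = x$1 * y$1 + x$2 * y$2" by (simp add: inner_vec_def sum_2)

locale frame =
  fixes u :: "real^2"
  assumes nu: "norm u = 1"
begin

definition v :: "real^2" where "v = vector [- (u$2), u$1]"

lemma uu: "u \<bullet> u = 1" using nu by (simp add: dot_square_norm)
lemma vv: "v \<bullet> v = 1" using uu unfolding v_def inner2 by (simp add: algebra_simps)
lemma uv: "u \<bullet> v = 0" unfolding v_def inner2 by (simp add: algebra_simps)
lemma vu: "v \<bullet> u = 0" using uv by (simp add: inner_commute)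

lemma decomp: "z = (z \<bullet> v) *\<^sub>R v + (z \<bullet> u) *\<^sub>R u"
proof -
  have e: "u$1 * u$1 + u$2 * u$2 = 1" using uu unfolding inner2 by simp
  have k1: "u$1 * (u$1 * w) + w * (u$2 * u$2) = w" for w
  proof -
    have "u$1 * (u$1 * w) + w * (u$2 * u$2) = (u$1 * u$1 + u$2 * u$2) * w" by (simp add: algebra_simps)
    then show ?thesis using e by simp
  qed
  have k2: "u$1 * (u$1 * w) + u$2 * (u$2 * w) = w" for w
  proof -
    have "u$1 * (u$1 * w) + u$2 * (u$2 * w) = (u$1 * u$1 + u$2 * u$2) * w" by (simp add: algebra_simps)
    then show ?thesis using e by simp
  qed
  show ?thesis unfolding vec_eq_iff forall_2 v_def inner2
    by (simp add: algebra_simps k1 k2)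
qed

definition TT :: "real^2 \<Rightarrow> real \<times> real" where "TT z = (z \<bullet> v, z \<bullet> u)"
definition Ti :: "real \<times> real \<Rightarrow> real^2" where "Ti q = fst q *\<^sub>R v + snd q *\<^sub>R u"

lemma TT_Ti: "TT (Ti q) = q"
  unfolding TT_def Ti_def by (simp add: inner_add_left vv uu uv vu)

lemma Ti_TT: "Ti (TT z) = z"
  unfolding TT_def Ti_def using decomp[of z] by simp

lemma dist_Ti: "dist (Ti q) (Ti q') = dist q q'"
proof -
  obtain s t s' t' where q: "q = (s, t)" and q': "q' = (s', t')" by (cases q, cases q')
  have "Ti q - Ti q' = (s - s') *\<^sub>R v + (t - t') *\<^sub>R u" unfolding q q' Ti_def by (simp add: algebra_simps)
  then have "(norm (Ti q - Ti q'))\<^sup>2 = (s - s')\<^sup>2 + (t - t')\<^sup>2"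
    unfolding power2_norm_eq_inner by (simp add: inner_add_left inner_add_right vv uu uv vu power2_eq_square)
  then have "norm (Ti q - Ti q') = sqrt ((s - s')\<^sup>2 + (t - t')\<^sup>2)"
    by (metis norm_ge_zero real_sqrt_unique)
  then show ?thesis unfolding q q' dist_norm[symmetric] by (simp add: dist_Pair_Pair dist_real_def)
qed

lemma dist_TT: "dist (TT z) (TT w) = dist z w"
  using dist_Ti[of "TT z" "TT w"] unfolding Ti_TT by simp

lemma proj_eq: "proj_perp u z = (z \<bullet> v) *\<^sub>R v"
  unfolding proj_perp_def using decomp[of z] by (simp add: algebra_simps)

lemma TT_cont: "continuous_on S TT"
  unfolding TT_def by (intro continuous_intros)


lemma main:
  assumes KB: "K \<in> ball_bodies" and Kne: "K \<noteq> {}" and Kbd: "bounded K"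
  shows "steiner_symmetral u K \<in> ball_bodies"
proof -
  obtain A0 where K: "K = (\<Inter>x\<in>A0. cball x 1)" using KB unfolding ball_bodies_def by blast
  define B where "B = {c. K \<subseteq> cball c 1}"
  have A0B: "A0 \<subseteq> B" unfolding B_def K by blast
  have KB': "K = (\<Inter>c\<in>B. cball c 1)"
  proof
    show "K \<subseteq> (\<Inter>c\<in>B. cball c 1)" unfolding B_def by blast
    show "(\<Inter>c\<in>B. cball c 1) \<subseteq> K" unfolding K using A0B by blast
  qed
  obtain k0 where k0: "k0 \<in> K" using Kne by blast
  have A0ne: "A0 \<noteq> {}"
  proof
    assume "A0 = {}"
    then have "K = UNIV" unfolding K by simp
    then show False using Kbd not_bounded_UNIV by metis
  qed
  have Bne: "B \<noteq> {}" using A0ne A0B by blast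
  have Bcl: "closed B"
  proof -
    have "B = (\<Inter>k\<in>K. cball k 1)" unfolding B_def by (auto simp: dist_commute)
    then show ?thesis by (auto intro: closed_INT)
  qed
  have Bbd: "bounded B"
  proof -
    have "B \<subseteq> cball k0 1" unfolding B_def using k0 by (auto simp: dist_commute)
    then show ?thesis using bounded_cball bounded_subset by blast
  qed
  have Bc: "compact B" using Bcl Bbd compact_eq_bounded_closed by blast
  define A where "A = TT ` B"
  have Ac: "compact A" unfolding A_def by (rule compact_continuous_image[OF TT_cont Bc])
  have Ane: "A \<noteq> {}" unfolding A_def using Bne by blast
  have K2iff: "q \<in> K2 A \<longleftrightarrow> Ti q \<in> K" for q
  proof -
    have "q \<in> K2 A \<longleftrightarrow> (\<forall>c\<in>B. dist (TT c) q \<le> 1)" unfolding K2_def A_def by auto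
    also have "\<dots> \<longleftrightarrow> (\<forall>c\<in>B. dist c (Ti q) \<le> 1)"
      using dist_TT[of _ "Ti q"] unfolding TT_Ti by simp
    also have "\<dots> \<longleftrightarrow> Ti q \<in> K" unfolding KB' by auto
    finally show ?thesis .
  qed
  have K2ne: "K2 A \<noteq> {}" using K2iff[of "TT k0"] k0 unfolding Ti_TT by blast
  have secK: "{t. s *\<^sub>R v + t *\<^sub>R u \<in> K} = sec2 A s" for s
    unfolding sec2_def using K2iff[of "(s, _)"] unfolding Ti_def by auto
  have symiff: "z \<in> steiner_symmetral u K \<longleftrightarrow> TT z \<in> S2 A" for z
  proof
    assume "z \<in> steiner_symmetral u K"
    then obtain x y where z: "z = x + y *\<^sub>R u" and x: "x \<in> proj_perp u ` K"
      and y: "\<bar>y\<bar> \<le> \<bar>sec_hi K u x - sec_lo K u x\<bar> / 2"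
      unfolding steiner_symmetral_def by blast
    obtain k where k: "k \<in> K" and xk: "x = (k \<bullet> v) *\<^sub>R v" using x proj_eq by blast
    define s where "s = k \<bullet> v"
    have "TT k \<in> K2 A" using K2iff[of "TT k"] k unfolding Ti_TT by simp
    then have sI: "s \<in> I2 A" unfolding I2_def s_def TT_def by force
    have "sec_hi K u x = Sup (sec2 A s)" "sec_lo K u x = Inf (sec2 A s)"
      unfolding sec_hi_def sec_lo_def xk s_def[symmetric] secK by simp_all
    then have yH: "\<bar>y\<bar> \<le> H2 A s" using y unfolding H2_def by simp
    have "TT z = (s, y)" unfolding z xk s_def[symmetric] TT_def
      by (simp add: inner_add_left vv uu uv vu)
    then show "TT z \<in> S2 A" unfolding S2_def using sI yH by simp
  next
    assume h: "TT z \<in> S2 A"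
    define s where "s = z \<bullet> v"
    define y where "y = z \<bullet> u"
    have sI: "s \<in> I2 A" and yH: "\<bar>y\<bar> \<le> H2 A s" using h unfolding S2_def TT_def s_def y_def by auto
    obtain t where "(s, t) \<in> K2 A" using sI unfolding I2_def by force
    then have kK: "Ti (s, t) \<in> K" using K2iff by blast
    have "proj_perp u (Ti (s, t)) = s *\<^sub>R v" unfolding proj_eq Ti_def by (simp add: inner_add_left vv uv)
    then have x: "s *\<^sub>R v \<in> proj_perp u ` K" using kK by (metis image_eqI)
    have "sec_hi K u (s *\<^sub>R v) = Sup (sec2 A s)" "sec_lo K u (s *\<^sub>R v) = Inf (sec2 A s)"
      unfolding sec_hi_def sec_lo_def secK by simp_all
    then have y': "\<bar>y\<bar> \<le> \<bar>sec_hi K u (s *\<^sub>R v) - sec_lo K u (s *\<^sub>R v)\<bar> / 2" using yH unfolding H2_def by simp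
    have "z = s *\<^sub>R v + y *\<^sub>R u" unfolding s_def y_def by (rule decomp)
    then show "z \<in> steiner_symmetral u K" unfolding steiner_symmetral_def using x y' by blast
  qed
  define Bs where "Bs = {c. steiner_symmetral u K \<subseteq> cball c 1}"
  have "steiner_symmetral u K = (\<Inter>c\<in>Bs. cball c 1)"
  proof
    show "steiner_symmetral u K \<subseteq> (\<Inter>c\<in>Bs. cball c 1)" unfolding Bs_def by blast
    show "(\<Inter>c\<in>Bs. cball c 1) \<subseteq> steiner_symmetral u K"
    proof
      fix z assume z: "z \<in> (\<Inter>c\<in>Bs. cball c 1)"
      show "z \<in> steiner_symmetral u K"
      proof (rule ccontr)
        assume "z \<notin> steiner_symmetral u K"
        then have "TT z \<notin> S2 A" using symiff by blast
        then obtain C where sub: "S2 A \<subseteq> cball C 1" and out: "TT z \<notin> cball C 1"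
          using core_full[OF Ac Ane K2ne, of "fst (TT z)" "snd (TT z)"] by auto
        have "steiner_symmetral u K \<subseteq> cball (Ti C) 1"
        proof
          fix w assume "w \<in> steiner_symmetral u K"
          then have "TT w \<in> cball C 1" using symiff sub by blast
          then have "dist (Ti C) (Ti (TT w)) \<le> 1" unfolding dist_Ti by simp
          then show "w \<in> cball (Ti C) 1" unfolding Ti_TT by simp
        qed
        then have "Ti C \<in> Bs" unfolding Bs_def by blast
        then have "z \<in> cball (Ti C) 1" using z by blast
        then have "dist (Ti C) (Ti (TT z)) \<le> 1" unfolding Ti_TT by simp
        then have "TT z \<in> cball C 1" unfolding dist_Ti by simp
        then show False using out by blast
      qed
    qed
  qed
  then show ?thesis unfolding ball_bodies_def by blast
qed

end



theorem theorem4p1: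
  fixes K :: "(real^2) set" and u :: "real^2"
  assumes "K \<in> ball_bodies" and "K \<noteq> {}" and "bounded K" and "norm u = 1"
  shows "steiner_symmetral u K \<in> ball_bodies"
proof -
  interpret frame u using assms(4) by unfold_locales
  show ?thesis using main assms(1,2,3) by blast
qed

end
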